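(* Let $d\ge2$, $N\ge1$, and $\beta=0$ (infinite temperature). Let $\mathbf p$ be a probability vector on $d$ levels and $\Pi$ a $d\times d$ permutation matrix, written as a product of transposition matrices $\Pi=\Pi_{i_mj_m}\Pi_{i_{m-1}j_{m-1}}\cdots\Pi_{i_1j_1}$ which is a decomposition into neighbour transpositions with respect to $\mathbf p$ (as defined in the context). Let $\mathcal P^{\Pi}=\mathcal P^{(i_mj_m)}\circ\cdots\circ\mathcal P^{(i_1j_1)}$. Then $$\mathcal P^{\Pi}(\mathbf p\otimes\boldsymbol\eta_M)=\mathbf q\otimes\boldsymbol\eta_M,\qquad \mathbf q=\big(\Pi+\epsilon\,\boldsymbol\Delta\big)\mathbf p+o\big(N^{-1/2}\big)\xrightarrow{N\to\infty}\Pi\mathbf p,$$ with $\epsilon=(\pi N)^{-1/2}$ and $$\boldsymbol\Delta=\sum_{l=1}^{m}\Big(\Pi_{i_mj_m}\cdots\Pi_{i_{l+1}j_{l+1}}\Big)\big(\mathbb 1-\Pi_{i_lj_l}\big)\Big(\Pi_{i_{l-1}j_{l-1}}\cdots\Pi_{i_1j_1}\Big)$$ (empty products being the identity).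
   Context: Setting: a $d$-level system with energies $E_1,\dots,E_d$; at $\beta=0$ its thermal distribution is uniform. An $N$-dimensional memory with trivial Hamiltonian has thermal state $\boldsymbol\eta_M=(1/N,\dots,1/N)$. Joint states are probability vectors $\mathbf Q$ of length $dN$, entry $(a-1)N+k$ corresponding to system level $a$ and memory level $k$; the joint thermal distribution $\Gamma=\boldsymbol\gamma\otimes\boldsymbol\eta_M$ is here uniform. $\Pi_{ij}$ denotes the permutation matrix transposing entries $i,j$. Two-level thermalisation $T_{xy}$: $Q_x\mapsto (Q_x+Q_y)\Gamma_x/(\Gamma_x+\Gamma_y)$, $Q_y\mapsto (Q_x+Q_y)\Gamma_y/(\Gamma_x+\Gamma_y)$, other entries unchanged. Round $\mathcal R^{(ij)}_k$ ($k=1,\dots,N$): apply sequentially, for $l=1,\dots,N$, $T_{(j-1)N+k,\,(i-1)N+l}$. $\widetilde{\mathcal P}^{(ij)}=\mathcal R^{(ij)}_N\circ\cdots\circ\mathcal R^{(ij)}_1$. Memory thermalisation $\mathcal T(\mathbf Q)=\mathbf q\otimes\boldsymbol\eta_M$, $q_a=\sum_{k}Q_{(a-1)N+k}$. $\mathcal P^{(ij)}=\mathcal T\circ\widetilde{\mathcal P}^{(ij)}$. $\beta$-order: for a distribution $\mathbf r$, its $\beta$-order is the permutation $\pi_{\mathbf r}$ arranging $(r_1/\gamma_1,\dots,r_d/\gamma_d)$ non-increasingly ($\pi_{\mathbf r}(a)$ is the position of $a$). A decomposition $\Pi=\Pi_{i_mj_m}\cdots\Pi_{i_1j_1}$ is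 into neighbour transpositions with respect to $\mathbf p$ if for each $k$ the transposition $\Pi_{i_kj_k}$ changes the $\beta$-order of $\Pi_{i_{k-1}j_{k-1}}\cdots\Pi_{i_1j_1}\mathbf p$ only by a transposition of two adjacent elements. *)

theory Defs
  imports Complex_Main
begin

text \<open>Conventions: all vectors are functions nat => real with 1-based indices.
  A system distribution is indexed by levels 1..d; a joint distribution of length d*N
  is indexed by 1..d*N, entry (a-1)*N+k corresponding to system level a, memory level k.
  Temperature beta = 0, so the system thermal distribution gamma is uniform (1/d),
  the memory thermal state eta_M is uniform (1/N), and the joint thermal state Gamma
  is uniform (1/(d*N)).\<close>

definition gamma0 :: "nat \<Rightarrow> nat \<Rightarrow> real" where
  "gamma0 d a = 1 / real d"

definition etaM :: "nat \<Rightarrow> nat \<Rightarrow> real" where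
  "etaM N k = 1 / real N"

definition Gamma0 :: "nat \<Rightarrow> nat \<Rightarrow> nat \<Rightarrow> real" where
  "Gamma0 d N x = gamma0 d ((x - 1) div N + 1) * etaM N ((x - 1) mod N + 1)"

definition tensor :: "nat \<Rightarrow> nat \<Rightarrow> (nat \<Rightarrow> real) \<Rightarrow> (nat \<Rightarrow> real) \<Rightarrow> nat \<Rightarrow> real" where
  "tensor d N q e x = (if 1 \<le> x \<and> x \<le> d * N
      then q ((x - 1) div N + 1) * e ((x - 1) mod N + 1) else 0)"

definition therm2 :: "(nat \<Rightarrow> real) \<Rightarrow> nat \<Rightarrow> nat \<Rightarrow> (nat \<Rightarrow> real) \<Rightarrow> nat \<Rightarrow> real" where
  "therm2 G x y Q = Q(x := (Q x + Q y) * G x / (G x + G y),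
                      y := (Q x + Q y) * G y / (G x + G y))"

definition round_ij :: "nat \<Rightarrow> nat \<Rightarrow> nat \<Rightarrow> nat \<Rightarrow> nat \<Rightarrow> (nat \<Rightarrow> real) \<Rightarrow> nat \<Rightarrow> real" where
  "round_ij d N i j k Q =
     foldl (\<lambda>Q' l. therm2 (Gamma0 d N) ((j - 1) * N + k) ((i - 1) * N + l) Q') Q [1..<Suc N]"

definition Ptilde :: "nat \<Rightarrow> nat \<Rightarrow> nat \<Rightarrow> nat \<Rightarrow> (nat \<Rightarrow> real) \<Rightarrow> nat \<Rightarrow> real" where
  "Ptilde d N i j Q = foldl (\<lambda>Q' k. round_ij d N i j k Q') Q [1..<Suc N]"

definition marg :: "nat \<Rightarrow> (nat \<Rightarrow> real) \<Rightarrow> nat \<Rightarrow> real" where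
  "marg N Q a = (\<Sum>k = 1..N. Q ((a - 1) * N + k))"

definition memtherm :: "nat \<Rightarrow> nat \<Rightarrow> (nat \<Rightarrow> real) \<Rightarrow> nat \<Rightarrow> real" where
  "memtherm d N Q = tensor d N (marg N Q) (etaM N)"

definition Pij :: "nat \<Rightarrow> nat \<Rightarrow> nat \<Rightarrow> nat \<Rightarrow> (nat \<Rightarrow> real) \<Rightarrow> nat \<Rightarrow> real" where
  "Pij d N i j Q = memtherm d N (Ptilde d N i j Q)"

text \<open>For ts = [(i_1,j_1), ..., (i_m,j_m)]:
  P^Pi = P^(i_m j_m) o ... o P^(i_1 j_1) (first pair applied first).\<close>
definition PPi :: "nat \<Rightarrow> nat \<Rightarrow> (nat \<times> nat) list \<Rightarrow> (nat \<Rightarrow> real) \<Rightarrow> nat \<Rightarrow> real" where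
  "PPi d N ts Q = foldl (\<lambda>Q' ij. Pij d N (fst ij) (snd ij) Q') Q ts"

definition swapv :: "nat \<Rightarrow> nat \<Rightarrow> (nat \<Rightarrow> real) \<Rightarrow> nat \<Rightarrow> real" where
  "swapv i j r a = (if a = i then r j else if a = j then r i else r a)"

text \<open>Action of Pi_{i_m j_m} ... Pi_{i_1 j_1} (first pair applied first).\<close>
definition permv :: "(nat \<times> nat) list \<Rightarrow> (nat \<Rightarrow> real) \<Rightarrow> nat \<Rightarrow> real" where
  "permv ts r = foldl (\<lambda>r' ij. swapv (fst ij) (snd ij) r') r ts"

text \<open>Delta p = sum_l (Pi_{>l}) (1 - Pi_{i_l j_l}) (Pi_{<l}) p  (0-based l here).\<close>
definition Delta_apply :: "(nat \<times> nat) list \<Rightarrow> (nat \<Rightarrow> real) \<Rightarrow> nat \<Rightarrow> real" where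
  "Delta_apply ts p a = (\<Sum>l < length ts.
      permv (drop (Suc l) ts)
        (\<lambda>b. permv (take l ts) p b - swapv (fst (ts ! l)) (snd (ts ! l)) (permv (take l ts) p) b) a)"

definition prob_vec :: "nat \<Rightarrow> (nat \<Rightarrow> real) \<Rightarrow> bool" where
  "prob_vec d p \<longleftrightarrow> (\<forall>a \<in> {1..d}. 0 \<le> p a) \<and> (\<Sum>a = 1..d. p a) = 1"

text \<open>pi is a beta-order of r: a permutation of {1..d} (pi a = position of a) arranging
  (r_1/gamma_1, ..., r_d/gamma_d) non-increasingly.\<close>
definition beta_order :: "nat \<Rightarrow> (nat \<Rightarrow> real) \<Rightarrow> (nat \<Rightarrow> nat) \<Rightarrow> bool" where
  "beta_order d r \<pi> \<longleftrightarrow> bij_betw \<pi> {1..d} {1..d} \<and>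
     (\<forall>a \<in> {1..d}. \<forall>b \<in> {1..d}. \<pi> a < \<pi> b \<longrightarrow> r b / gamma0 d b \<le> r a / gamma0 d a)"

definition neighbour_decomp :: "nat \<Rightarrow> (nat \<times> nat) list \<Rightarrow> (nat \<Rightarrow> real) \<Rightarrow> bool" where
  "neighbour_decomp d ts p \<longleftrightarrow>
     (\<forall>ij \<in> set ts. fst ij \<in> {1..d} \<and> snd ij \<in> {1..d} \<and> fst ij \<noteq> snd ij) \<and>
     (\<forall>k < length ts. \<exists>\<pi>. beta_order d (permv (take k ts) p) \<pi> \<and>
         (\<pi> (fst (ts ! k)) + 1 = \<pi> (snd (ts ! k)) \<or> \<pi> (snd (ts ! k)) + 1 = \<pi> (fst (ts ! k))))"

end

theory Submission
  imports Defs "HOL-Analysis.Analysis"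
begin

definition cc :: "nat \<Rightarrow> real" where
  "cc N = pochhammer (1/2::real) N / fact N"

lemma cc_Suc: "cc (Suc N) = cc N * (real N + 1/2) / (real N + 1)"
  unfolding cc_def by (simp add: pochhammer_Suc field_simps)

lemma rGS_eq:
  assumes "N \<ge> 1"
  shows "rGamma_series (1/2::real) N = cc N * (real N + 1/2) / sqrt (real N)"
proof -
  have "sqrt (real N) = real N powr (1/2)" using assms by (simp add: powr_half_sqrt)
  also have "\<dots> = exp (1/2 * ln (real N))" using assms by (simp add: powr_def)
  finally have "exp (1/2 * ln (real N)) = sqrt (real N)" by simp
  then show ?thesis
    unfolding rGamma_series_def cc_def
    by (simp add: pochhammer_Suc field_simps)
qed

lemma aux_cancel: "(b::real) \<noteq> 0 \<Longrightarrow> x * b / c * (n / b) = x * (n / c)"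
  by (simp add: field_simps)

lemma sqrt_cc_lim: "(\<lambda>N. sqrt (real N) * cc N) \<longlonglongrightarrow> 1 / sqrt pi"
proof -
  have r: "rGamma (1/2::real) = 1 / sqrt pi"
  proof -
    have "rGamma (1/2::real) = inverse (Gamma (1/2))" by (rule rGamma_inverse_Gamma)
    also have "Gamma (1/2::real) = sqrt pi" by (rule Gamma_one_half_real)
    finally show ?thesis by (simp only: inverse_eq_divide)
  qed
  have l1: "rGamma_series (1/2::real) \<longlonglongrightarrow> 1 / sqrt pi"
    using rGamma_series_LIMSEQ[of "1/2::real"] unfolding r .
  have l2: "(\<lambda>N. real N / (real N + 1/2)) \<longlonglongrightarrow> 1"
  proof -
    have "(\<lambda>N. 1 / (1 + 1/2 * (1 / real N))) \<longlonglongrightarrow> 1 / (1 + 1/2 * 0)"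
      by (intro tendsto_intros) simp_all
    then have "(\<lambda>N. 1 / (1 + 1/2 * (1 / real N))) \<longlonglongrightarrow> 1" by simp
    moreover have "eventually (\<lambda>N. 1 / (1 + 1/2 * (1 / real N)) = real N / (real N + 1/2)) sequentially"
      by (rule eventually_sequentiallyI[of 1]) (simp add: field_simps)
    ultimately show ?thesis by (rule Lim_transform_eventually)
  qed
  have "(\<lambda>N. rGamma_series (1/2::real) N * (real N / (real N + 1/2))) \<longlonglongrightarrow> 1 / sqrt pi"
    using tendsto_mult[OF l1 l2] by simp
  moreover have "eventually (\<lambda>N. rGamma_series (1/2::real) N * (real N / (real N + 1/2)) = sqrt (real N) * cc N) sequentially"
  proof (rule eventually_sequentiallyI[of 1])
    fix N :: nat assume "N \<ge> 1"
    then have s: "sqrt (real N) > 0" by simp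
    have "sqrt (real N) * sqrt (real N) = real N" by simp
    then show "rGamma_series (1/2::real) N * (real N / (real N + 1/2)) = sqrt (real N) * cc N"
    proof -
      have h: "real N + 1/2 > 0" by simp
      have "rGamma_series (1/2::real) N * (real N / (real N + 1/2)) = cc N * (real N / sqrt (real N))"
        unfolding rGS_eq[OF \<open>N \<ge> 1\<close>] using aux_cancel[of "real N + 1/2"] h by simp
      also have "real N / sqrt (real N) = sqrt (real N)" by (rule real_div_sqrt) simp
      finally show ?thesis by simp
    qed
  qed
  ultimately show ?thesis by (rule Lim_transform_eventually)
qed

fun Af :: "real \<Rightarrow> real \<Rightarrow> nat \<Rightarrow> nat \<Rightarrow> real" where
  "Af x y 0 l = x"
| "Af x y (Suc k) 0 = y"
| "Af x y (Suc k) (Suc l) = (Af x y (Suc k) l + Af x y k (Suc l)) / 2"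

declare Af.simps(3)[simp del]

lemma Af_lin: "Af x y k l = y + (x - y) * Af 1 0 k l"
  by (induction x y k l rule: Af.induct) (simp_all add: field_simps Af.simps(3))

lemma Af_sym: "0 < k + l \<Longrightarrow> Af x y k l = Af y x l k"
proof (induction "k + l" arbitrary: k l rule: less_induct)
  case less
  show ?case
  proof (cases k)
    case 0 then obtain l' where "l = Suc l'" using less.prems by (cases l) auto
    then show ?thesis using 0 by simp
  next
    case (Suc k')
    show ?thesis
    proof (cases l)
      case 0 then show ?thesis using Suc by simp
    next
      case (Suc l')
      have "Af x y (Suc k') l' = Af y x l' (Suc k')" using less.hyps[of "Suc k'" l'] Suc \<open>k = Suc k'\<close> by simp
      moreover have "Af x y k' (Suc l') = Af y x (Suc l') k'" using less.hyps[of k' "Suc l'"] Suc \<open>k = Suc k'\<close> by simp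
      ultimately show ?thesis using Suc \<open>k = Suc k'\<close> by (simp add: Af.simps(3))
    qed
  qed
qed

lemma Af_diag: "Af 1 0 (Suc n) (Suc n) = 1/2"
proof -
  have "Af 1 0 (Suc n) (Suc n) = Af 0 1 (Suc n) (Suc n)" using Af_sym[of "Suc n" "Suc n" 1 0] by simp
  also have "\<dots> = 1 - Af 1 0 (Suc n) (Suc n)" using Af_lin[of 0 1] by simp
  finally show ?thesis by simp
qed

definition G :: "nat \<Rightarrow> nat \<Rightarrow> real" where
  "G n k = (\<Sum>j = k..n. real (n choose j)) / 2 ^ n"

lemma H_rec: "(\<Sum>j = Suc k..Suc n. real (Suc n choose j)) =
   (\<Sum>j = Suc k..n. real (n choose j)) + (\<Sum>j = k..n. real (n choose j))"
proof -
  have "(\<Sum>j = Suc k..Suc n. real (Suc n choose j)) = (\<Sum>j = k..n. real (Suc n choose Suc j))"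
    by (rule sum.shift_bounds_cl_Suc_ivl)
  also have "\<dots> = (\<Sum>j = k..n. real (n choose Suc j)) + (\<Sum>j = k..n. real (n choose j))"
    by (simp add: sum.distrib)
  also have "(\<Sum>j = k..n. real (n choose Suc j)) = (\<Sum>j = Suc k..Suc n. real (n choose j))"
    by (rule sum.shift_bounds_cl_Suc_ivl[symmetric])
  also have "\<dots> = (\<Sum>j = Suc k..n. real (n choose j))"
  proof (cases "Suc k \<le> Suc n")
    case True
    then show ?thesis by (simp add: sum.cl_ivl_Suc)
  next
    case False
    then show ?thesis by simp
  qed
  finally show ?thesis .
qed

lemma G_rec: "G (Suc n) (Suc k) = (G n (Suc k) + G n k) / 2"
  unfolding G_def H_rec by (simp add: field_simps)

lemma G_zero: "G n 0 = 1"
  unfolding G_def using choose_row_sum[of n]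
  by (simp add: atLeast0AtMost flip: of_nat_sum)

lemma G_over: "G k (Suc k) = 0"
  unfolding G_def by simp

lemma Af_G: "0 < k + l \<Longrightarrow> Af 1 0 k l = G (k + l - 1) k"
proof (induction "k + l" arbitrary: k l rule: less_induct)
  case less
  show ?case
  proof (cases k)
    case 0 then show ?thesis by (simp add: G_zero)
  next
    case (Suc k')
    show ?thesis
    proof (cases l)
      case 0 then show ?thesis using Suc by (simp add: G_over)
    next
      case (Suc l')
      have "Af 1 0 (Suc k') l' = G (k' + l') (Suc k')" using less.hyps[of "Suc k'" l'] Suc \<open>k = Suc k'\<close> by simp
      moreover have "Af 1 0 k' (Suc l') = G (k' + l') k'" using less.hyps[of k' "Suc l'"] Suc \<open>k = Suc k'\<close> by simp
      ultimately show ?thesis using Suc \<open>k = Suc k'\<close> by (simp add: G_rec Af.simps(3))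
    qed
  qed
qed

lemma G_half: "G (2 * N) N = 1/2 + real ((2 * N) choose N) / 2 ^ (2 * N + 1)"
proof -
  let ?f = "\<lambda>j. real ((2 * N) choose j)"
  have rev: "(\<Sum>j = 0..N. ?f j) = (\<Sum>j = N..2*N. ?f j)"
  proof -
    have "(\<Sum>j = N..2*N. ?f j) = (\<Sum>j = 0..N. ?f (2*N - j))"
      by (rule sum.reindex_bij_witness[of _ "\<lambda>j. 2*N - j" "\<lambda>j. 2*N - j"]) auto
    also have "\<dots> = (\<Sum>j = 0..N. ?f j)"
      by (rule sum.cong) (auto simp: binomial_symmetric[symmetric])
    finally show ?thesis by simp
  qed
  have split: "(\<Sum>j = 0..2*N. ?f j) = (\<Sum>j = 0..N. ?f j) + (\<Sum>j = N..2*N. ?f j) - ?f N"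
  proof -
    have "(\<Sum>j = 0..2*N. ?f j) = (\<Sum>j = 0..<N. ?f j) + (\<Sum>j = N..2*N. ?f j)"
      by (rule sum.atLeastLessThan_concat[of 0 N "Suc (2*N)", simplified atLeastLessThanSuc_atLeastAtMost, symmetric]) auto
    moreover have "(\<Sum>j = 0..N. ?f j) = (\<Sum>j = 0..<N. ?f j) + ?f N"
      by (simp add: atLeastLessThanSuc_atLeastAtMost[symmetric])
    ultimately show ?thesis by simp
  qed
  have tot: "(\<Sum>j = 0..2*N. ?f j) = 2 ^ (2 * N)"
    using choose_row_sum[of "2*N"] by (simp add: atLeast0AtMost flip: of_nat_sum)
  have "(\<Sum>j = N..2*N. ?f j) = (2 ^ (2 * N) + ?f N) / 2"
    using rev split tot by simp
  then show ?thesis unfolding G_def by (simp add: field_simps)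
qed

definition Rs :: "nat \<Rightarrow> nat \<Rightarrow> real" where
  "Rs k L = (\<Sum>l = 1..L. Af 1 0 k l)"

lemma Rs_Suc: "Rs (Suc k) L = Rs k L - Af 1 0 (Suc k) L"
proof (induction L)
  case 0 then show ?case by (simp add: Rs_def)
next
  case (Suc L)
  have "Rs (Suc k) (Suc L) = Rs (Suc k) L + Af 1 0 (Suc k) (Suc L)" by (simp add: Rs_def)
  moreover have "Rs k (Suc L) = Rs k L + Af 1 0 k (Suc L)" by (simp add: Rs_def)
  moreover have "Af 1 0 (Suc k) (Suc L) = (Af 1 0 (Suc k) L + Af 1 0 k (Suc L)) / 2" by (rule Af.simps(3))
  ultimately show ?case using Suc by simp
qed

lemma cc_binom: "cc N = real ((2 * N) choose N) / 4 ^ N"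
proof -
  have "real ((2 * N) choose N) = fact (2 * N) / (fact N * fact N)"
    by (simp add: binomial_fact)
  also have "\<dots> = 2 ^ (2 * N) * pochhammer (1 / 2) N / fact N"
    by (simp add: fact_double)
  finally show ?thesis unfolding cc_def by (simp add: power_mult)
qed

lemma T_eq: "Rs N N = real N * cc N"
proof (induction N)
  case 0 then show ?case by (simp add: Rs_def)
next
  case (Suc N)
  have "Rs (Suc N) (Suc N) = Rs N (Suc N) - 1/2" by (simp add: Rs_Suc Af_diag)
  also have "Rs N (Suc N) = Rs N N + Af 1 0 N (Suc N)" by (simp add: Rs_def)
  also have "Af 1 0 N (Suc N) = G (2 * N) N" by (simp add: Af_G mult_2)
  also have "\<dots> = 1/2 + cc N / 2" by (simp add: G_half cc_binom power_mult)
  finally have "Rs (Suc N) (Suc N) = real N * cc N + cc N / 2" using Suc by simp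
  then show ?case by (simp add: cc_Suc field_simps)
qed

definition avg :: "nat \<Rightarrow> nat \<Rightarrow> (nat \<Rightarrow> real) \<Rightarrow> nat \<Rightarrow> real" where
  "avg X Y Q = Q(X := (Q X + Q Y) / 2, Y := (Q X + Q Y) / 2)"

lemma aux_half: "(g::real) \<noteq> 0 \<Longrightarrow> a * g / (g + g) = a / 2"
  by (simp add: field_simps)

lemma therm2_avg: "0 < d \<Longrightarrow> 0 < N \<Longrightarrow> therm2 (Gamma0 d N) x y Q = avg x y Q"
proof -
  assume h: "0 < d" "0 < N"
  have g: "1 / real d * (1 / real N) \<noteq> 0" using h by simp
  show ?thesis
    unfolding therm2_def avg_def Gamma0_def gamma0_def etaM_def aux_half[OF g] ..
qed

lemma avg_X: "avg X Y Q X = (Q X + Q Y) / 2"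
  unfolding avg_def by simp
lemma avg_Y: "avg X Y Q Y = (Q X + Q Y) / 2"
  unfolding avg_def by simp
lemma avg_other: "z \<noteq> X \<Longrightarrow> z \<noteq> Y \<Longrightarrow> avg X Y Q z = Q z"
  unfolding avg_def by simp

fun Bf :: "(nat \<Rightarrow> real) \<Rightarrow> nat \<Rightarrow> (nat \<Rightarrow> nat) \<Rightarrow> nat \<Rightarrow> real" where
  "Bf Q X Y 0 = Q X"
| "Bf Q X Y (Suc l) = (Bf Q X Y l + Q (Y (Suc l))) / 2"

lemma round_gen:
  assumes "inj_on Y {1..L}" "X \<notin> Y ` {1..L}"
  shows "foldl (\<lambda>Q l. avg X (Y l) Q) Q [1..<Suc L] X = Bf Q X Y L
       \<and> (\<forall>l\<in>{1..L}. foldl (\<lambda>Q l. avg X (Y l) Q) Q [1..<Suc L] (Y l) = Bf Q X Y l)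
       \<and> (\<forall>z. z \<noteq> X \<and> z \<notin> Y ` {1..L} \<longrightarrow> foldl (\<lambda>Q l. avg X (Y l) Q) Q [1..<Suc L] z = Q z)"
  using assms
proof (induction L)
  case 0 then show ?case by simp
next
  case (Suc L)
  define R where "R = foldl (\<lambda>Q l. avg X (Y l) Q) Q [1..<Suc L]"
  have inj: "inj_on Y {1..L}" using Suc.prems(1) by (rule inj_on_subset) auto
  have nX: "X \<notin> Y ` {1..L}" using Suc.prems(2) by auto
  note IH = Suc.IH[OF inj nX]
  have YS: "Y (Suc L) \<noteq> X" using Suc.prems(2) by auto
  have YS2: "Y (Suc L) \<notin> Y ` {1..L}"
  proof
    assume "Y (Suc L) \<in> Y ` {1..L}"
    then obtain l where "l \<in> {1..L}" "Y (Suc L) = Y l" by auto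
    with Suc.prems(1) have "Suc L = l" by (auto dest: inj_onD)
    with \<open>l \<in> {1..L}\<close> show False by simp
  qed
  have RY: "R (Y (Suc L)) = Q (Y (Suc L))" using IH YS YS2 unfolding R_def by blast
  have RX: "R X = Bf Q X Y L" using IH unfolding R_def by blast
  have RYl: "\<forall>l\<in>{1..L}. R (Y l) = Bf Q X Y l" using IH unfolding R_def by blast
  have Rz: "\<forall>z. z \<noteq> X \<and> z \<notin> Y ` {1..L} \<longrightarrow> R z = Q z" using IH unfolding R_def by blast
  have eq: "foldl (\<lambda>Q l. avg X (Y l) Q) Q [1..<Suc (Suc L)] = avg X (Y (Suc L)) R"
    unfolding R_def by simp
  show ?case unfolding eq
  proof (intro conjI allI ballI impI)
    show "avg X (Y (Suc L)) R X = Bf Q X Y (Suc L)"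
      using RX RY by (simp add: avg_X)
  next
    fix l assume l: "l \<in> {1..Suc L}"
    show "avg X (Y (Suc L)) R (Y l) = Bf Q X Y l"
    proof (cases "l = Suc L")
      case True then show ?thesis using RX RY by (simp add: avg_Y)
    next
      case False
      then have l': "l \<in> {1..L}" using l by auto
      then have "Y l \<noteq> X" using Suc.prems(2) by auto
      moreover have "Y l \<noteq> Y (Suc L)" using YS2 l' by (metis image_eqI)
      ultimately show ?thesis using RYl l' by (simp add: avg_other)
    qed
  next
    fix z assume z: "z \<noteq> X \<and> z \<notin> Y ` {1..Suc L}"
    then have "z \<noteq> Y (Suc L)" by auto
    moreover have "z \<notin> Y ` {1..L}" using z by auto
    ultimately show "avg X (Y (Suc L)) R z = Q z" using Rz z by (simp add: avg_other)
  qed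
qed

definition blk :: "nat \<Rightarrow> nat \<Rightarrow> nat \<Rightarrow> nat" where
  "blk N a l = (a - 1) * N + l"

lemma blk_div: "1 \<le> l \<Longrightarrow> l \<le> N \<Longrightarrow> (blk N a l - 1) div N = a - 1"
proof -
  assume "1 \<le> l" "l \<le> N"
  then obtain m where m: "l = Suc m" "m < N" by (cases l) auto
  then have "blk N a l - 1 = m + N * (a - 1)" by (simp add: blk_def)
  then show ?thesis using m by simp
qed

lemma blk_mod: "1 \<le> l \<Longrightarrow> l \<le> N \<Longrightarrow> (blk N a l - 1) mod N = l - 1"
proof -
  assume "1 \<le> l" "l \<le> N"
  then obtain m where m: "l = Suc m" "m < N" by (cases l) auto
  then have "blk N a l - 1 = m + N * (a - 1)" by (simp add: blk_def)
  then show ?thesis using m by simp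
qed

lemma blk_inj:
  assumes "1 \<le> a" "1 \<le> b" "l \<in> {1..N}" "m \<in> {1..N}" "blk N a l = blk N b m"
  shows "a = b \<and> l = m"
proof -
  have "a - 1 = b - 1" using blk_div[of l N a] blk_div[of m N b] assms by auto
  moreover have "l - 1 = m - 1" using blk_mod[of l N a] blk_mod[of m N b] assms by auto
  ultimately show ?thesis using assms by auto
qed

lemma blk_range: "1 \<le> a \<Longrightarrow> a \<le> d \<Longrightarrow> 1 \<le> l \<Longrightarrow> l \<le> N \<Longrightarrow> 1 \<le> blk N a l \<and> blk N a l \<le> d * N"
proof -
  assume h: "1 \<le> a" "a \<le> d" "1 \<le> l" "l \<le> N"
  have "(a - 1) * N \<le> (d - 1) * N" using h by simp
  then have "(a - 1) * N + l \<le> (d - 1) * N + N" using add_mono h(4) by blast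
  also have "\<dots> = d * N" using h by (cases d) auto
  finally show ?thesis using h unfolding blk_def by simp
qed

lemma tensor_blk: "1 \<le> a \<Longrightarrow> a \<le> d \<Longrightarrow> 1 \<le> l \<Longrightarrow> l \<le> N \<Longrightarrow> tensor d N q e (blk N a l) = q a * e l"
  unfolding tensor_def using blk_range[of a d l N] blk_div[of l N a] blk_mod[of l N a] by simp

lemma marg_tensor: "1 \<le> a \<Longrightarrow> a \<le> d \<Longrightarrow> 1 \<le> N \<Longrightarrow> marg N (tensor d N r (etaM N)) a = r a"
proof -
  assume h: "1 \<le> a" "a \<le> d" "1 \<le> N"
  have "marg N (tensor d N r (etaM N)) a = (\<Sum>k = 1..N. r a * (1 / real N))"
    unfolding marg_def using tensor_blk[of a d _ N r "etaM N"] h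
    by (intro sum.cong) (auto simp: blk_def etaM_def)
  then show ?thesis using h by simp
qed

lemma tensor_cong:
  assumes "1 \<le> N" "\<forall>a\<in>{1..d}. r a = r' a"
  shows "tensor d N r e = tensor d N r' e"
proof
  fix x
  show "tensor d N r e x = tensor d N r' e x"
  proof (cases "1 \<le> x \<and> x \<le> d * N")
    case True
    then have "x - 1 < N * d" by (simp add: mult.commute less_eq_Suc_le)
    then have "(x - 1) div N < d" using div_less_iff_less_mult[of N "x - 1" d] assms(1) by (simp add: mult.commute)
    then have "(x - 1) div N + 1 \<in> {1..d}" by simp
    then show ?thesis unfolding tensor_def using assms by simp
  next
    case False then show ?thesis unfolding tensor_def by (simp only: if_not_P[OF False] if_False)
  qed
qed

lemma round_avg: "0 < d \<Longrightarrow> 0 < N \<Longrightarrow>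
  round_ij d N i j k Q = foldl (\<lambda>Q l. avg (blk N j k) (blk N i l) Q) Q [1..<Suc N]"
  unfolding round_ij_def blk_def by (simp add: therm2_avg)

lemma state:
  fixes q :: "nat \<Rightarrow> real" and d N i j K :: nat
  assumes h: "1 \<le> i" "i \<le> d" "1 \<le> j" "j \<le> d" "i \<noteq> j" "1 \<le> N"
  defines "Q0 \<equiv> tensor d N q (etaM N)"
    and "x \<equiv> q i / real N" and "y \<equiv> q j / real N"
    and "St \<equiv> \<lambda>K. foldl (\<lambda>Q' k. round_ij d N i j k Q') (tensor d N q (etaM N)) [1..<Suc K]"
  shows "K \<le> N \<Longrightarrow> (\<forall>l\<in>{1..N}. St K (blk N i l) = Af x y K l)
     \<and> (\<forall>k\<in>{1..N}. St K (blk N j k) = (if k \<le> K then Af x y k N else y))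
     \<and> (\<forall>z. (\<forall>l\<in>{1..N}. z \<noteq> blk N i l) \<and> (\<forall>k\<in>{1..N}. z \<noteq> blk N j k) \<longrightarrow> St K z = Q0 z)"
proof (induction K)
  case 0
  have "St 0 = Q0" unfolding St_def Q0_def by simp
  moreover have "\<forall>l\<in>{1..N}. Q0 (blk N i l) = x"
    unfolding Q0_def x_def using h tensor_blk[of i d _ N q "etaM N"] by (simp add: etaM_def)
  moreover have "\<forall>k\<in>{1..N}. Q0 (blk N j k) = y"
    unfolding Q0_def y_def using h tensor_blk[of j d _ N q "etaM N"] by (simp add: etaM_def)
  ultimately show ?case by simp
next
  case (Suc K)
  then have KN: "K \<le> N" by simp
  note IH = Suc.IH[OF KN]
  define S where "S = St K"
  define X where "X = blk N j (Suc K)"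
  have S1: "\<forall>l\<in>{1..N}. S (blk N i l) = Af x y K l" using IH S_def by blast
  have S2: "\<forall>k\<in>{1..N}. S (blk N j k) = (if k \<le> K then Af x y k N else y)" using IH S_def by blast
  have S3: "\<forall>z. (\<forall>l\<in>{1..N}. z \<noteq> blk N i l) \<and> (\<forall>k\<in>{1..N}. z \<noteq> blk N j k) \<longrightarrow> S z = Q0 z"
    using IH S_def by blast
  have inj: "inj_on (blk N i) {1..N}"
  proof (rule inj_onI)
    fix a b assume "a \<in> {1..N}" "b \<in> {1..N}" "blk N i a = blk N i b"
    then show "a = b" using blk_inj[of i i a N b] h(1) by blast
  qed
  have nX: "X \<notin> blk N i ` {1..N}"
  proof
    assume "X \<in> blk N i ` {1..N}"
    then obtain l where "l \<in> {1..N}" "blk N j (Suc K) = blk N i l" unfolding X_def by auto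
    moreover have "Suc K \<in> {1..N}" using Suc.prems by simp
    ultimately have "j = i" using blk_inj[of j i "Suc K" N l] h(1,3) by blast
    with h show False by simp
  qed
  have Bf_eq: "l \<le> N \<Longrightarrow> Bf S X (blk N i) l = Af x y (Suc K) l" for l
  proof (induction l)
    case 0
    have "S X = y" using S2 Suc.prems unfolding X_def by auto
    then show ?case by simp
  next
    case (Suc l)
    then have "Bf S X (blk N i) l = Af x y (Suc K) l" by simp
    moreover have "S (blk N i (Suc l)) = Af x y K (Suc l)" using S1 Suc.prems by auto
    ultimately show ?case by (simp add: Af.simps(3))
  qed
  have StS: "St (Suc K) = foldl (\<lambda>Q l. avg X (blk N i l) Q) S [1..<Suc N]"
    unfolding St_def S_def X_def using h by (simp add: round_avg)
  note RG = round_gen[OF inj nX, of S]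
  show ?case
  proof (intro conjI ballI allI impI)
    fix l assume l: "l \<in> {1..N}"
    show "St (Suc K) (blk N i l) = Af x y (Suc K) l"
      unfolding StS using RG l Bf_eq[of l] by auto
  next
    fix k assume k: "k \<in> {1..N}"
    show "St (Suc K) (blk N j k) = (if k \<le> Suc K then Af x y k N else y)"
    proof (cases "k = Suc K")
      case True
      then show ?thesis unfolding StS using RG Bf_eq[of N] X_def by simp
    next
      case False
      have "blk N j k \<noteq> X" using blk_inj[of j j k N "Suc K"] h k Suc.prems False X_def by auto
      moreover have "blk N j k \<notin> blk N i ` {1..N}"
      proof
        assume "blk N j k \<in> blk N i ` {1..N}"
        then obtain m where "m \<in> {1..N}" "blk N j k = blk N i m" by auto
        then have "j = i" using blk_inj[of j i k N m] h(1,3) k by blast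
        with h(5) show False by simp
      qed
      ultimately have "St (Suc K) (blk N j k) = S (blk N j k)" unfolding StS using RG by blast
      then show ?thesis using S2 k False by auto
    qed
  next
    fix z assume z: "(\<forall>l\<in>{1..N}. z \<noteq> blk N i l) \<and> (\<forall>k\<in>{1..N}. z \<noteq> blk N j k)"
    then have "z \<noteq> X" using Suc.prems X_def by auto
    moreover have "z \<notin> blk N i ` {1..N}" using z by auto
    ultimately have "St (Suc K) z = S z" unfolding StS using RG by blast
    then show "St (Suc K) z = Q0 z" using S3 z by auto
  qed
qed

definition mix :: "real \<Rightarrow> nat \<Rightarrow> nat \<Rightarrow> (nat \<Rightarrow> real) \<Rightarrow> nat \<Rightarrow> real" where
  "mix c i j q = (\<lambda>a. swapv i j q a + c * (q a - swapv i j q a))"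

lemma sum_i:
  assumes "1 \<le> N"
  shows "(\<Sum>l = 1..N. Af (qi / real N) (qj / real N) N l) = qj + (qi - qj) * cc N"
proof -
  have "(\<Sum>l = 1..N. Af (qi / real N) (qj / real N) N l)
      = (\<Sum>l = 1..N. qj / real N + (qi / real N - qj / real N) * Af 1 0 N l)"
    by (rule sum.cong) (simp_all add: Af_lin[of "qi / real N"])
  also have "\<dots> = real N * (qj / real N) + (qi / real N - qj / real N) * Rs N N"
    by (simp add: sum.distrib Rs_def sum_distrib_left)
  also have "\<dots> = qj + (qi - qj) * cc N"
  proof -
    have n: "real N \<noteq> 0" using assms by simp
    have "(qi / real N - qj / real N) * (real N * cc N) = (qi - qj) * cc N"
      using n by (simp add: field_simps)
    moreover have "real N * (qj / real N) = qj" using n by simp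
    ultimately show ?thesis unfolding T_eq by (simp add: algebra_simps)
  qed
  finally show ?thesis .
qed

lemma sum_aux: "(\<Sum>k = 1..N. a + b * (1 - f k)) = real N * a + b * (real N - (\<Sum>k = 1..N. f k))"
proof -
  have "(\<Sum>k = 1..N. a + b * (1 - f k)) = (\<Sum>k = 1..N. (a + b) - b * f k)"
    by (simp add: algebra_simps)
  also have "\<dots> = real N * (a + b) - b * (\<Sum>k = 1..N. f k)"
    by (simp add: sum_subtractf sum_distrib_left)
  finally show ?thesis by (simp add: algebra_simps)
qed

lemma sum_j:
  assumes "1 \<le> N"
  shows "(\<Sum>k = 1..N. Af (qi / real N) (qj / real N) k N) = qi + (qj - qi) * cc N"
proof -
  have e: "Af 1 0 k N = 1 - Af 1 0 N k" if "k \<in> {1..N}" for k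
  proof -
    have "Af 1 0 k N = Af 0 1 N k" using Af_sym[of k N 1 0] that by simp
    also have "\<dots> = 1 - Af 1 0 N k" using Af_lin[of 0 1 N k] by simp
    finally show ?thesis .
  qed
  have "(\<Sum>k = 1..N. Af (qi / real N) (qj / real N) k N)
      = (\<Sum>k = 1..N. qj / real N + (qi / real N - qj / real N) * (1 - Af 1 0 N k))"
    by (rule sum.cong) (simp_all add: Af_lin[of "qi / real N"] e)
  also have "\<dots> = real N * (qj / real N) + (qi / real N - qj / real N) * (real N - Rs N N)"
    unfolding Rs_def by (rule sum_aux)
  also have "\<dots> = qi + (qj - qi) * cc N"
  proof -
    have n: "real N \<noteq> 0" using assms by simp
    have "(qi / real N - qj / real N) * (real N - real N * cc N) = (qi - qj) * (1 - cc N)"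
      using n by (simp add: field_simps)
    moreover have "real N * (qj / real N) = qj" using n by simp
    ultimately show ?thesis unfolding T_eq by (simp add: algebra_simps)
  qed
  finally show ?thesis .
qed

lemma Pij_tensor:
  assumes h: "1 \<le> i" "i \<le> d" "1 \<le> j" "j \<le> d" "i \<noteq> j" "1 \<le> N"
  shows "Pij d N i j (tensor d N q (etaM N)) = tensor d N (mix (cc N) i j q) (etaM N)"
proof -
  define Q0 where "Q0 = tensor d N q (etaM N)"
  define P where "P = Ptilde d N i j Q0"
  have P_eq: "P = foldl (\<lambda>Q' k. round_ij d N i j k Q') (tensor d N q (etaM N)) [1..<Suc N]"
    unfolding P_def Ptilde_def Q0_def ..
  note ST = state[OF h, where q = q and K = N, folded P_eq, simplified]
  have S1: "\<forall>l\<in>{1..N}. P (blk N i l) = Af (q i / real N) (q j / real N) N l" using ST by simp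
  have S2: "\<forall>k\<in>{1..N}. P (blk N j k) = Af (q i / real N) (q j / real N) k N" using ST by auto
  have S3: "\<forall>z. (\<forall>l\<in>{1..N}. z \<noteq> blk N i l) \<and> (\<forall>k\<in>{1..N}. z \<noteq> blk N j k) \<longrightarrow> P z = Q0 z"
    using ST unfolding Q0_def by simp
  have mg: "marg N Q a = (\<Sum>k = 1..N. Q (blk N a k))" for Q a unfolding marg_def blk_def ..
  have "\<forall>a\<in>{1..d}. marg N P a = mix (cc N) i j q a"
  proof
    fix a assume a: "a \<in> {1..d}"
    show "marg N P a = mix (cc N) i j q a"
    proof (cases "a = i")
      case True
      have "marg N P a = (\<Sum>l = 1..N. Af (q i / real N) (q j / real N) N l)"
        unfolding mg True by (rule sum.cong) (use S1 in auto)
      also have "\<dots> = q j + (q i - q j) * cc N" by (rule sum_i[OF h(6)])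
      finally show ?thesis unfolding mix_def swapv_def using True by simp
    next
      case False
      show ?thesis
      proof (cases "a = j")
        case True
        have "marg N P a = (\<Sum>k = 1..N. Af (q i / real N) (q j / real N) k N)"
          unfolding mg True by (rule sum.cong) (use S2 in auto)
        also have "\<dots> = q i + (q j - q i) * cc N" by (rule sum_j[OF h(6)])
        finally show ?thesis unfolding mix_def swapv_def using True h(5) by simp
      next
        case False2: False
        have "marg N P a = (\<Sum>k = 1..N. Q0 (blk N a k))"
          unfolding mg
        proof (rule sum.cong)
          fix k assume k: "k \<in> {1..N}"
          have "\<forall>l\<in>{1..N}. blk N a k \<noteq> blk N i l"
          proof (intro ballI notI)
            fix l assume "l \<in> {1..N}" "blk N a k = blk N i l"
            then have "a = i" using blk_inj[of a i k N l] a k h(1) by simp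
            with False show False by simp
          qed
          moreover have "\<forall>l\<in>{1..N}. blk N a k \<noteq> blk N j l"
          proof (intro ballI notI)
            fix l assume "l \<in> {1..N}" "blk N a k = blk N j l"
            then have "a = j" using blk_inj[of a j k N l] a k h(3) by simp
            with False2 show False by simp
          qed
          ultimately show "P (blk N a k) = Q0 (blk N a k)" using S3 by blast
        qed simp
        also have "\<dots> = marg N Q0 a" unfolding mg by simp
        also have "\<dots> = q a" unfolding Q0_def using marg_tensor[of a d N q] a h(6) by simp
        finally show ?thesis unfolding mix_def swapv_def using False False2 by simp
      qed
    qed
  qed
  then have "tensor d N (marg N P) (etaM N) = tensor d N (mix (cc N) i j q) (etaM N)"
    by (rule tensor_cong[OF h(6)])
  then show ?thesis unfolding Pij_def memtherm_def P_def Q0_def .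
qed

definition qs :: "nat \<Rightarrow> (nat \<times> nat) list \<Rightarrow> (nat \<Rightarrow> real) \<Rightarrow> nat \<Rightarrow> real" where
  "qs N ts p = foldl (\<lambda>r ij. mix (cc N) (fst ij) (snd ij) r) p ts"

definition tr :: "nat \<Rightarrow> nat \<Rightarrow> nat \<Rightarrow> nat" where
  "tr i j a = (if a = i then j else if a = j then i else a)"

lemma swapv_tr: "swapv i j r a = r (tr i j a)"
  unfolding swapv_def tr_def by simp

lemma permv_snoc: "permv (ts @ [t]) r a = permv ts r (tr (fst t) (snd t) a)"
  unfolding permv_def by (simp add: swapv_tr)

lemma qs_snoc: "qs N (ts @ [t]) p a =
   qs N ts p (tr (fst t) (snd t) a) + cc N * (qs N ts p a - qs N ts p (tr (fst t) (snd t) a))"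
  unfolding qs_def by (simp add: mix_def swapv_tr)

lemma Delta_snoc: "Delta_apply (ts @ [t]) p a =
   Delta_apply ts p (tr (fst t) (snd t) a) + (permv ts p a - permv ts p (tr (fst t) (snd t) a))"
proof -
  let ?s = "tr (fst t) (snd t)"
  let ?f = "\<lambda>ts l a. permv (drop (Suc l) ts)
        (\<lambda>b. permv (take l ts) p b - swapv (fst (ts ! l)) (snd (ts ! l)) (permv (take l ts) p) b) a"
  have "Delta_apply (ts @ [t]) p a = (\<Sum>l < Suc (length ts). ?f (ts @ [t]) l a)"
    unfolding Delta_apply_def by simp
  also have "\<dots> = (\<Sum>l < length ts. ?f (ts @ [t]) l a) + ?f (ts @ [t]) (length ts) a"
    by (rule sum.lessThan_Suc)
  also have "(\<Sum>l < length ts. ?f (ts @ [t]) l a) = (\<Sum>l < length ts. ?f ts l (?s a))"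
  proof (rule sum.cong)
    fix l assume "l \<in> {..<length ts}"
    then have l: "l < length ts" by simp
    have d: "drop (Suc l) (ts @ [t]) = drop (Suc l) ts @ [t]" using l by simp
    have tk: "take l (ts @ [t]) = take l ts" using l by simp
    have nt: "(ts @ [t]) ! l = ts ! l" using l by (simp add: nth_append)
    show "?f (ts @ [t]) l a = ?f ts l (?s a)"
      unfolding d tk nt permv_snoc ..
  qed simp
  also have "\<dots> = Delta_apply ts p (?s a)" unfolding Delta_apply_def ..
  also have "?f (ts @ [t]) (length ts) a = permv ts p a - permv ts p (?s a)"
    by (simp add: permv_def swapv_tr)
  finally show ?thesis .
qed

definition eps :: "nat \<Rightarrow> real" where
  "eps N = 1 / sqrt (pi * real N)"

lemma inv_sqrt_lim: "(\<lambda>N. 1 / sqrt (real N)) \<longlonglongrightarrow> 0"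
proof -
  have "(\<lambda>N. sqrt (1 / real N)) \<longlonglongrightarrow> sqrt 0"
    by (intro tendsto_real_sqrt lim_1_over_n)
  then show ?thesis by (simp add: real_sqrt_divide)
qed

lemma eps_eq: "eps N = 1 / sqrt pi * (1 / sqrt (real N))"
  unfolding eps_def by (simp add: real_sqrt_mult)

lemma eps_lim: "eps \<longlonglongrightarrow> 0"
proof -
  have "(\<lambda>N. 1 / sqrt pi * (1 / sqrt (real N))) \<longlonglongrightarrow> 1 / sqrt pi * 0"
    by (intro tendsto_intros inv_sqrt_lim)
  then have "(\<lambda>N. 1 / sqrt pi * (1 / sqrt (real N))) \<longlonglongrightarrow> 0" by (simp only: mult_zero_right)
  moreover have "(\<lambda>N. 1 / sqrt pi * (1 / sqrt (real N))) = eps" by (rule ext) (rule eps_eq[symmetric])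
  ultimately show ?thesis by simp
qed

lemma s_lim: "(\<lambda>N. sqrt (real N) * eps N) \<longlonglongrightarrow> 1 / sqrt pi"
proof -
  have "eventually (\<lambda>N. 1 / sqrt pi = sqrt (real N) * eps N) sequentially"
    by (rule eventually_sequentiallyI[of 1]) (simp add: eps_eq)
  then show ?thesis by (rule Lim_transform_eventually[OF tendsto_const])
qed

lemma c_lim: "(\<lambda>N. sqrt (real N) * (cc N - eps N)) \<longlonglongrightarrow> 0"
proof -
  have "(\<lambda>N. sqrt (real N) * cc N - sqrt (real N) * eps N) \<longlonglongrightarrow> 1 / sqrt pi - 1 / sqrt pi"
    by (intro tendsto_diff sqrt_cc_lim s_lim)
  then show ?thesis by (simp add: right_diff_distrib)
qed

definition Err :: "(nat \<times> nat) list \<Rightarrow> (nat \<Rightarrow> real) \<Rightarrow> nat \<Rightarrow> nat \<Rightarrow> real" where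
  "Err ts p a N = sqrt (real N) * (qs N ts p a - (permv ts p a + (1 / sqrt (pi * real N)) * Delta_apply ts p a))"

lemma u_lim:
  assumes "(Err ts p a) \<longlonglongrightarrow> 0"
  shows "(\<lambda>N. qs N ts p a - permv ts p a) \<longlonglongrightarrow> 0"
proof -
  have "(\<lambda>N. Err ts p a N * (1 / sqrt (real N)) + eps N * Delta_apply ts p a) \<longlonglongrightarrow> 0 * 0 + 0 * Delta_apply ts p a"
    by (intro tendsto_intros assms inv_sqrt_lim eps_lim)
  then have "(\<lambda>N. Err ts p a N * (1 / sqrt (real N)) + eps N * Delta_apply ts p a) \<longlonglongrightarrow> 0"
    by (simp only: mult_zero_left add_0_left)
  moreover have "eventually (\<lambda>N. Err ts p a N * (1 / sqrt (real N)) + eps N * Delta_apply ts p a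
      = qs N ts p a - permv ts p a) sequentially"
  proof (rule eventually_sequentiallyI[of 1])
    fix N :: nat assume "N \<ge> 1"
    then have "sqrt (real N) \<noteq> 0" by simp
    then show "Err ts p a N * (1 / sqrt (real N)) + eps N * Delta_apply ts p a = qs N ts p a - permv ts p a"
      unfolding Err_def eps_def by (simp add: field_simps)
  qed
  ultimately show ?thesis by (rule Lim_transform_eventually)
qed

lemma Err_lim: "\<forall>a. (Err ts p a) \<longlonglongrightarrow> 0"
proof (induction ts rule: rev_induct)
  case Nil
  show ?case unfolding Err_def qs_def permv_def Delta_apply_def by simp
next
  case (snoc t ts)
  show ?case
  proof
    fix a
    let ?s = "tr (fst t) (snd t)"
    let ?u = "\<lambda>N b. qs N ts p b - permv ts p b"
    have u: "(\<lambda>N. ?u N b) \<longlonglongrightarrow> 0" for b using u_lim snoc.IH by blast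
    have eq: "Err (ts @ [t]) p a N = Err ts p (?s a) N
       + sqrt (real N) * (cc N - eps N) * ((?u N a - ?u N (?s a)) + (permv ts p a - permv ts p (?s a)))
       + sqrt (real N) * eps N * (?u N a - ?u N (?s a))" for N
      unfolding Err_def qs_snoc Delta_snoc permv_snoc eps_def by (simp add: algebra_simps)
    have "(\<lambda>N. Err ts p (?s a) N
       + sqrt (real N) * (cc N - eps N) * ((?u N a - ?u N (?s a)) + (permv ts p a - permv ts p (?s a)))
       + sqrt (real N) * eps N * (?u N a - ?u N (?s a)))
       \<longlonglongrightarrow> 0 + 0 * ((0 - 0) + (permv ts p a - permv ts p (?s a))) + 1 / sqrt pi * (0 - 0)"
      by (intro tendsto_intros snoc.IH[rule_format] c_lim s_lim u)
    then show "Err (ts @ [t]) p a \<longlonglongrightarrow> 0" unfolding eq by simp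
  qed
qed

lemma PPi_tensor:
  assumes "\<forall>ij\<in>set ts. fst ij \<in> {1..d} \<and> snd ij \<in> {1..d} \<and> fst ij \<noteq> snd ij" "1 \<le> N"
  shows "PPi d N ts (tensor d N p (etaM N)) = tensor d N (qs N ts p) (etaM N)"
  using assms(1)
proof (induction ts arbitrary: p)
  case Nil then show ?case unfolding PPi_def qs_def by simp
next
  case (Cons t ts)
  obtain i j where t: "t = (i, j)" by (cases t)
  have h: "1 \<le> i" "i \<le> d" "1 \<le> j" "j \<le> d" "i \<noteq> j" using Cons.prems t by auto
  have "PPi d N (t # ts) (tensor d N p (etaM N)) = PPi d N ts (Pij d N i j (tensor d N p (etaM N)))"
    unfolding PPi_def t by simp
  also have "\<dots> = PPi d N ts (tensor d N (mix (cc N) i j p) (etaM N))"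
    unfolding Pij_tensor[OF h assms(2)] ..
  also have "\<dots> = tensor d N (qs N ts (mix (cc N) i j p)) (etaM N)"
    using Cons.IH Cons.prems by simp
  also have "qs N ts (mix (cc N) i j p) = qs N (t # ts) p"
    unfolding qs_def t by simp
  finally show ?case .
qed

theorem theorem1:
  fixes d :: nat and p :: "nat \<Rightarrow> real" and ts :: "(nat \<times> nat) list"
  assumes "d \<ge> 2"
    and "prob_vec d p"
    and "neighbour_decomp d ts p"
  shows "(\<forall>N \<ge> 1. PPi d N ts (tensor d N p (etaM N))
                 = tensor d N (marg N (PPi d N ts (tensor d N p (etaM N)))) (etaM N))
       \<and> (\<forall>a \<in> {1..d}.
            ((\<lambda>N. sqrt (real N) *
                 (marg N (PPi d N ts (tensor d N p (etaM N))) a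
                  - (permv ts p a + (1 / sqrt (pi * real N)) * Delta_apply ts p a)))
             \<longlonglongrightarrow> 0))
       \<and> (\<forall>a \<in> {1..d}.
            ((\<lambda>N. marg N (PPi d N ts (tensor d N p (etaM N))) a) \<longlonglongrightarrow> permv ts p a))"
proof -
  have rng: "\<forall>ij\<in>set ts. fst ij \<in> {1..d} \<and> snd ij \<in> {1..d} \<and> fst ij \<noteq> snd ij"
    using assms(3) unfolding neighbour_decomp_def by blast
  have PT: "PPi d N ts (tensor d N p (etaM N)) = tensor d N (qs N ts p) (etaM N)" if "1 \<le> N" for N
    by (rule PPi_tensor[OF rng that])
  have MT: "marg N (PPi d N ts (tensor d N p (etaM N))) a = qs N ts p a"
    if "1 \<le> N" "a \<in> {1..d}" for N a
    unfolding PT[OF that(1)] using marg_tensor[of a d N "qs N ts p"] that by simp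
  have C1: "\<forall>N \<ge> 1. PPi d N ts (tensor d N p (etaM N))
                 = tensor d N (marg N (PPi d N ts (tensor d N p (etaM N)))) (etaM N)"
  proof (intro allI impI)
    fix N :: nat assume N: "N \<ge> 1"
    have "tensor d N (marg N (PPi d N ts (tensor d N p (etaM N)))) (etaM N) = tensor d N (qs N ts p) (etaM N)"
      by (rule tensor_cong[OF N]) (use MT N in blast)
    then show "PPi d N ts (tensor d N p (etaM N))
                 = tensor d N (marg N (PPi d N ts (tensor d N p (etaM N)))) (etaM N)"
      using PT[OF N] by simp
  qed
  have C2: "\<forall>a \<in> {1..d}.
            ((\<lambda>N. sqrt (real N) *
                 (marg N (PPi d N ts (tensor d N p (etaM N))) a
                  - (permv ts p a + (1 / sqrt (pi * real N)) * Delta_apply ts p a)))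
             \<longlonglongrightarrow> 0)"
  proof
    fix a assume a: "a \<in> {1..d}"
    have E0: "(\<lambda>N. Err ts p a N) \<longlonglongrightarrow> 0" using Err_lim[of ts p] by simp
    have ev: "eventually (\<lambda>N. Err ts p a N = sqrt (real N) *
                 (marg N (PPi d N ts (tensor d N p (etaM N))) a
                  - (permv ts p a + (1 / sqrt (pi * real N)) * Delta_apply ts p a))) sequentially"
    proof (rule eventually_sequentiallyI[of 1])
      fix N :: nat assume N: "N \<ge> 1"
      show "Err ts p a N = sqrt (real N) *
                 (marg N (PPi d N ts (tensor d N p (etaM N))) a
                  - (permv ts p a + (1 / sqrt (pi * real N)) * Delta_apply ts p a))"
        unfolding Err_def MT[OF N a] ..
    qed
    show "((\<lambda>N. sqrt (real N) *
                 (marg N (PPi d N ts (tensor d N p (etaM N))) a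
                  - (permv ts p a + (1 / sqrt (pi * real N)) * Delta_apply ts p a)))
             \<longlonglongrightarrow> 0)" by (rule Lim_transform_eventually[OF E0 ev])
  qed
  have C3: "\<forall>a \<in> {1..d}.
            ((\<lambda>N. marg N (PPi d N ts (tensor d N p (etaM N))) a) \<longlonglongrightarrow> permv ts p a)"
  proof
    fix a assume a: "a \<in> {1..d}"
    have u: "(\<lambda>N. qs N ts p a - permv ts p a) \<longlonglongrightarrow> 0"
      using u_lim[of ts p a] Err_lim[of ts p] by simp
    have "(\<lambda>N. (qs N ts p a - permv ts p a) + permv ts p a) \<longlonglongrightarrow> 0 + permv ts p a"
      by (intro tendsto_add u tendsto_const)
    then have "(\<lambda>N. qs N ts p a) \<longlonglongrightarrow> permv ts p a" by simp
    moreover have "eventually (\<lambda>N. qs N ts p a = marg N (PPi d N ts (tensor d N p (etaM N))) a) sequentially"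
      by (rule eventually_sequentiallyI[of 1]) (rule MT[symmetric, OF _ a])
    ultimately show "(\<lambda>N. marg N (PPi d N ts (tensor d N p (etaM N))) a) \<longlonglongrightarrow> permv ts p a"
      by (rule Lim_transform_eventually)
  qed
  show ?thesis using C1 C2 C3 by blast
qed

end
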